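(* Let $D=(V,A)$ be a digraph, $\{S,T\}$ a partition of $V$ with $S,T\ne\emptyset$, $H=A[S,T]$ the set of arcs from $S$ to $T$, and $k$ an integer. Let $\mathcal{C}_1=\{\delta^-_H(U):\emptyset\neq U\subseteq T\}$ and define $g_1:\mathcal{C}_1\to\mathbb{Z}$ by $g_1(C)=\max\{k-d^-_{A[T]}(U): \emptyset\ne U\subseteq T,\ C=\delta^-_H(U)\}$. Then $\mathcal{C}_1$ is an intersecting family on $H$ and $g_1$ is intersecting supermodular. Moreover, if $k\le \min\{|\delta^-_A(U)|:\emptyset\neq U\subseteq T\}$, then $g_1(C)\le\min\{k,|C|\}$ for every $C\in\mathcal{C}_1$.
   Context: For $B\subseteq A$ and $U\subseteq V$, $\delta^-_B(U)$ is the set of arcs of $B$ entering $U$ and $d^-_B(U)=|\delta^-_B(U)|$; $A[T]$ is the set of arcs with both ends in $T$. A family $\mathcal{C}\subseteq 2^H$ is intersecting if $X\cup Y,X\cap Y\in\mathcal{C}$ whenever $X,Y\in\mathcal{C}$ and $X\cap Y\ne\emptyset$; $g:\mathcal{C}\to\mathbb{R}$ is intersecting supermodular if $g(X)+g(Y)\le g(X\cup Y)+g(X\cap Y)$ for all such $X,Y$. *)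

theory Defs
  imports Main "Graph_Theory.Digraph"
begin

definition delta_in :: "('a,'b) pre_digraph \<Rightarrow> 'b set \<Rightarrow> 'a set \<Rightarrow> 'b set" where
  "delta_in G B U = {e \<in> B. head G e \<in> U \<and> tail G e \<notin> U}"

definition arcs_in :: "('a,'b) pre_digraph \<Rightarrow> 'a set \<Rightarrow> 'b set" where
  "arcs_in G X = {e \<in> arcs G. tail G e \<in> X \<and> head G e \<in> X}"

definition arcs_between :: "('a,'b) pre_digraph \<Rightarrow> 'a set \<Rightarrow> 'a set \<Rightarrow> 'b set" where
  "arcs_between G S T = {e \<in> arcs G. tail G e \<in> S \<and> head G e \<in> T}"

definition intersecting_family :: "'c set \<Rightarrow> 'c set set \<Rightarrow> bool" where
  "intersecting_family H \<C> \<longleftrightarrow> \<C> \<subseteq> Pow H \<and>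
     (\<forall>X\<in>\<C>. \<forall>Y\<in>\<C>. X \<inter> Y \<noteq> {} \<longrightarrow> X \<union> Y \<in> \<C> \<and> X \<inter> Y \<in> \<C>)"

definition intersecting_supermodular :: "'c set set \<Rightarrow> ('c set \<Rightarrow> real) \<Rightarrow> bool" where
  "intersecting_supermodular \<C> g \<longleftrightarrow>
     (\<forall>X\<in>\<C>. \<forall>Y\<in>\<C>. X \<inter> Y \<noteq> {} \<longrightarrow> g X + g Y \<le> g (X \<union> Y) + g (X \<inter> Y))"

end

theory Submission
  imports Defs
begin

lemma card_sub_ineq:
  fixes B :: "'b set" and hd tl :: "'b \<Rightarrow> 'a"
  assumes "finite B"
  shows "card {e\<in>B. hd e \<in> U \<union> W \<and> tl e \<notin> U \<union> W} + card {e\<in>B. hd e \<in> U \<inter> W \<and> tl e \<notin> U \<inter> W}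
     \<le> card {e\<in>B. hd e \<in> U \<and> tl e \<notin> U} + card {e\<in>B. hd e \<in> W \<and> tl e \<notin> W}"
proof -
  have c: "\<And>P. card {e\<in>B. P e} = (\<Sum>e\<in>B. if P e then 1 else 0::nat)"
    using assms by (simp add: sum.inter_filter[symmetric])
  show ?thesis
    unfolding c sum.distrib[symmetric]
    by (rule sum_mono) auto
qed

theorem mainTheorem5:
  fixes G :: "('a,'b) pre_digraph" and S T :: "'a set" and k :: int
    and H :: "'b set" and \<C>1 :: "'b set set" and g1 :: "'b set \<Rightarrow> int"
  assumes "fin_digraph G"
    and "S \<union> T = verts G" and "S \<inter> T = {}" and "S \<noteq> {}" and "T \<noteq> {}"
    and H_def: "H = arcs_between G S T"
    and C1_def: "\<C>1 = {delta_in G H U | U. U \<noteq> {} \<and> U \<subseteq> T}"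
    and g1_def: "\<And>C. g1 C = Max {k - int (card (delta_in G (arcs_in G T) U)) | U.
                                   U \<noteq> {} \<and> U \<subseteq> T \<and> C = delta_in G H U}"
  shows "intersecting_family H \<C>1
    \<and> intersecting_supermodular \<C>1 (\<lambda>C. real_of_int (g1 C))
    \<and> (k \<le> Min {int (card (delta_in G (arcs G) U)) | U. U \<noteq> {} \<and> U \<subseteq> T}
         \<longrightarrow> (\<forall>C\<in>\<C>1. g1 C \<le> min k (int (card C))))"
proof -
  interpret fin_digraph G by fact
  have finT: "finite T" using assms(2) finite_verts by (metis finite_Un)
  have finA: "finite (arcs G)" by simp
  define d where "d U = card (delta_in G (arcs_in G T) U)" for U
  define F where "F C = {k - int (d U) | U. U \<noteq> {} \<and> U \<subseteq> T \<and> C = delta_in G H U}" for C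
  have g1F: "g1 C = Max (F C)" for C using g1_def unfolding F_def d_def by simp
  have dH: "U \<subseteq> T \<Longrightarrow> delta_in G H U = {e\<in>arcs G. tail G e \<in> S \<and> head G e \<in> U}" for U
    using assms(3) unfolding H_def delta_in_def arcs_between_def by auto
  have finPow: "finite {U. U \<noteq> {} \<and> U \<subseteq> T}" using finT by simp
  have finF: "finite (F C)" for C
  proof -
    have "F C \<subseteq> (\<lambda>U. k - int (d U)) ` {U. U \<noteq> {} \<and> U \<subseteq> T}" unfolding F_def by auto
    thus ?thesis using finPow finite_surj by blast
  qed
  have memF: "U \<noteq> {} \<Longrightarrow> U \<subseteq> T \<Longrightarrow> k - int (d U) \<le> g1 (delta_in G H U)" for U
    unfolding g1F by (rule Max_ge[OF finF]) (auto simp: F_def)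
  have achF: "U \<noteq> {} \<Longrightarrow> U \<subseteq> T \<Longrightarrow> \<exists>U0. U0 \<noteq> {} \<and> U0 \<subseteq> T \<and> delta_in G H U = delta_in G H U0
      \<and> g1 (delta_in G H U) = k - int (d U0)" for U
  proof -
    assume "U \<noteq> {}" "U \<subseteq> T"
    hence ne: "F (delta_in G H U) \<noteq> {}" unfolding F_def by auto
    have "g1 (delta_in G H U) \<in> F (delta_in G H U)" unfolding g1F by (rule Max_in[OF finF ne])
    thus ?thesis unfolding F_def by auto
  qed
  have un: "U \<subseteq> T \<Longrightarrow> W \<subseteq> T \<Longrightarrow> delta_in G H U \<union> delta_in G H W = delta_in G H (U \<union> W)" for U W
    using dH[of U] dH[of W] dH[of "U \<union> W"] by auto
  have int: "U \<subseteq> T \<Longrightarrow> W \<subseteq> T \<Longrightarrow> delta_in G H U \<inter> delta_in G H W = delta_in G H (U \<inter> W)" for U W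
    using dH[of U] dH[of W] dH[of "U \<inter> W"] by auto
  have part1: "intersecting_family H \<C>1"
    unfolding intersecting_family_def
  proof (intro conjI ballI impI)
    show "\<C>1 \<subseteq> Pow H" unfolding C1_def delta_in_def by auto
  next
    fix X Y assume X: "X \<in> \<C>1" and Y: "Y \<in> \<C>1" and ne: "X \<inter> Y \<noteq> {}"
    from X obtain U where U: "U \<noteq> {}" "U \<subseteq> T" "X = delta_in G H U" unfolding C1_def by auto
    from Y obtain W where W: "W \<noteq> {}" "W \<subseteq> T" "Y = delta_in G H W" unfolding C1_def by auto
    have "U \<inter> W \<noteq> {}"
    proof
      assume "U \<inter> W = {}"
      hence "delta_in G H (U \<inter> W) = {}" by (simp add: delta_in_def)
      thus False using ne int[OF U(2) W(2)] U(3) W(3) by simp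
    qed
    have e1: "X \<union> Y = delta_in G H (U \<union> W)" using un[OF U(2) W(2)] U(3) W(3) by simp
    have e2: "X \<inter> Y = delta_in G H (U \<inter> W)" using int[OF U(2) W(2)] U(3) W(3) by simp
    show "X \<union> Y \<in> \<C>1" unfolding C1_def e1 using U W by auto
    show "X \<inter> Y \<in> \<C>1" unfolding C1_def e2 using U W \<open>U \<inter> W \<noteq> {}\<close> by auto
  qed
  have part2: "intersecting_supermodular \<C>1 (\<lambda>C. real_of_int (g1 C))"
    unfolding intersecting_supermodular_def
  proof (intro ballI impI)
    fix X Y assume X: "X \<in> \<C>1" and Y: "Y \<in> \<C>1" and ne: "X \<inter> Y \<noteq> {}"
    from X obtain U where U: "U \<noteq> {}" "U \<subseteq> T" "X = delta_in G H U" unfolding C1_def by auto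
    from Y obtain W where W: "W \<noteq> {}" "W \<subseteq> T" "Y = delta_in G H W" unfolding C1_def by auto
    obtain U0 where U0: "U0 \<noteq> {}" "U0 \<subseteq> T" "X = delta_in G H U0" "g1 X = k - int (d U0)"
      using achF[OF U(1,2)] U(3) by metis
    obtain W0 where W0: "W0 \<noteq> {}" "W0 \<subseteq> T" "Y = delta_in G H W0" "g1 Y = k - int (d W0)"
      using achF[OF W(1,2)] W(3) by metis
    have i0: "U0 \<inter> W0 \<noteq> {}"
    proof
      assume "U0 \<inter> W0 = {}"
      hence "delta_in G H (U0 \<inter> W0) = {}" by (simp add: delta_in_def)
      thus False using ne int[OF U0(2) W0(2)] U0(3) W0(3) by simp
    qed
    have a: "k - int (d (U0 \<union> W0)) \<le> g1 (X \<union> Y)"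
      using memF[of "U0 \<union> W0"] U0 W0 un[OF U0(2) W0(2)] by auto
    have b: "k - int (d (U0 \<inter> W0)) \<le> g1 (X \<inter> Y)"
      using memF[of "U0 \<inter> W0"] U0 W0 int[OF U0(2) W0(2)] i0 by auto
    have fin: "finite (arcs_in G T)" unfolding arcs_in_def by simp
    have "d (U0 \<union> W0) + d (U0 \<inter> W0) \<le> d U0 + d W0"
      unfolding d_def delta_in_def by (rule card_sub_ineq[OF fin])
    hence "g1 X + g1 Y \<le> g1 (X \<union> Y) + g1 (X \<inter> Y)" using a b U0(4) W0(4) by linarith
    thus "real_of_int (g1 X) + real_of_int (g1 Y) \<le> real_of_int (g1 (X \<union> Y)) + real_of_int (g1 (X \<inter> Y))"
      by linarith
  qed
  have part3: "k \<le> Min {int (card (delta_in G (arcs G) U)) | U. U \<noteq> {} \<and> U \<subseteq> T}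
         \<longrightarrow> (\<forall>C\<in>\<C>1. g1 C \<le> min k (int (card C)))"
  proof (intro impI ballI)
    assume k: "k \<le> Min {int (card (delta_in G (arcs G) U)) | U. U \<noteq> {} \<and> U \<subseteq> T}"
    fix C assume "C \<in> \<C>1"
    then obtain U where U: "U \<noteq> {}" "U \<subseteq> T" "C = delta_in G H U" unfolding C1_def by auto
    obtain U0 where U0: "U0 \<noteq> {}" "U0 \<subseteq> T" "C = delta_in G H U0" "g1 C = k - int (d U0)"
      using achF[OF U(1,2)] U(3) by metis
    have finM: "finite {int (card (delta_in G (arcs G) U)) | U. U \<noteq> {} \<and> U \<subseteq> T}"
    proof -
      have "{int (card (delta_in G (arcs G) U)) | U. U \<noteq> {} \<and> U \<subseteq> T}
          = (\<lambda>U. int (card (delta_in G (arcs G) U))) ` {U. U \<noteq> {} \<and> U \<subseteq> T}" by auto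
      thus ?thesis using finPow by simp
    qed
    have "Min {int (card (delta_in G (arcs G) U)) | U. U \<noteq> {} \<and> U \<subseteq> T} \<le> int (card (delta_in G (arcs G) U0))"
      by (rule Min_le[OF finM]) (use U0 in auto)
    moreover have sub: "delta_in G (arcs G) U0 \<subseteq> C \<union> delta_in G (arcs_in G T) U0"
    proof
      fix e assume e: "e \<in> delta_in G (arcs G) U0"
      hence "tail G e \<in> verts G" by (auto simp: delta_in_def)
      hence "tail G e \<in> S \<or> tail G e \<in> T" using assms(2) by auto
      thus "e \<in> C \<union> delta_in G (arcs_in G T) U0"
        using e U0(2) unfolding U0(3) dH[OF U0(2)] by (auto simp: delta_in_def arcs_in_def)
    qed
    hence "card (delta_in G (arcs G) U0) \<le> card C + d U0"
    proof -
      have f: "finite (C \<union> delta_in G (arcs_in G T) U0)"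
        unfolding U0(3) dH[OF U0(2)] by (auto simp: delta_in_def arcs_in_def)
      have "card (delta_in G (arcs G) U0) \<le> card (C \<union> delta_in G (arcs_in G T) U0)"
        by (rule card_mono[OF f sub])
      also have "\<dots> \<le> card C + d U0" unfolding d_def by (rule card_Un_le)
      finally show ?thesis .
    qed
    ultimately show "g1 C \<le> min k (int (card C))" using k U0(4) by linarith
  qed
  show ?thesis using part1 part2 part3 by blast
qed

end
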